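(* Let $E$ be an arbitrary directed graph and $U$ a compact open invariant subset of $G_E^{(0)}$. Let $\mathcal{M}$ be the set of all minimal nonempty compact open invariant subsets of $G_E^{(0)}$ contained in $U$. Then $\mathcal{M}$ is finite, its elements are pairwise disjoint, and $U=\bigsqcup_{V\in\mathcal{M}}V$.
   Context: For a directed graph $E$ (paths $\mu=\mu_1\cdots\mu_n$ with $r(\mu_i)=s(\mu_{i+1})$, $|\mu|=n$, $\mathrm{Path}(E)$ the finite paths including vertices, $E^\infty$ infinite paths, sinks = vertices emitting no edges, $\mathrm{Inf}(E)$ = vertices emitting infinitely many edges), let $X=E^\infty\cup\{\mu\in\mathrm{Path}(E): r(\mu)\text{ a sink}\}\cup\{\mu: r(\mu)\in\mathrm{Inf}(E)\}$ and $G_E=\{(\alpha x,|\alpha|-|\beta|,\beta x):\alpha,\beta\in\mathrm{Path}(E),x\in X,r(\alpha)=r(\beta)=s(x)\}$, with product $(x,k,y)(y,l,z)=(x,k+l,z)$, inverse $(y,-k,x)$, range $(x,0,x)$, source $(y,0,y)$; unit space $G_E^{(0)}=\{(x,0,x)\}\cong X$, topologized by the basis of compact open sets $Z(\mu)\setminus\bigcup_{e\in F}Z(\mu e)$ with $Z(\mu)=\{\mu x:x\in X,s(x)=r(\mu)\}$ and $F\subseteq s^{-1}(r(\mu))$ finite. $U\subseteq G_E^{(0)}$ is invariant if for every $\gamma\in G_E$, $s(\gamma)\in U$ iff $r(\gamma)\in U$. A minimal compact open invariant subset is a nonempty compact open invariant subset containing no strictly smaller nonempty compact open invariant subset. *)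

theory Defs
  imports "HOL-Analysis.Analysis"
begin

text \<open>A directed graph E is given by its vertex type 'v, its edge type 'e and the
source and range maps src rng :: 'e => 'v.  A finite path is  Fin v es : it starts at
vertex v and traverses the edge list es (length 0 paths are the vertices);
an infinite path is  Inf f  with f :: nat => 'e.\<close>

datatype ('v, 'e) gpath = Fin 'v "'e list" | Inf "nat \<Rightarrow> 'e"

fun gsrc :: "('e \<Rightarrow> 'v) \<Rightarrow> ('v, 'e) gpath \<Rightarrow> 'v" where
  "gsrc src (Fin v es) = v"
| "gsrc src (Inf f) = src (f 0)"

fun grng :: "('e \<Rightarrow> 'v) \<Rightarrow> ('v, 'e) gpath \<Rightarrow> 'v" where
  "grng rng (Fin v es) = (if es = [] then v else rng (last es))"
| "grng rng (Inf f) = undefined"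

fun glen :: "('v, 'e) gpath \<Rightarrow> nat" where
  "glen (Fin v es) = length es"
| "glen (Inf f) = 0"

definition finpaths :: "('e \<Rightarrow> 'v) \<Rightarrow> ('e \<Rightarrow> 'v) \<Rightarrow> ('v, 'e) gpath set" where
  "finpaths src rng = {Fin v es | v es.
      (es \<noteq> [] \<longrightarrow> src (hd es) = v) \<and>
      (\<forall>i. Suc i < length es \<longrightarrow> rng (es ! i) = src (es ! Suc i))}"

definition infpaths :: "('e \<Rightarrow> 'v) \<Rightarrow> ('e \<Rightarrow> 'v) \<Rightarrow> ('v, 'e) gpath set" where
  "infpaths src rng = {Inf f | f. \<forall>i. rng (f i) = src (f (Suc i))}"

definition sink :: "('e \<Rightarrow> 'v) \<Rightarrow> 'v \<Rightarrow> bool" where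
  "sink src v \<longleftrightarrow> {e. src e = v} = {}"

definition inf_emitter :: "('e \<Rightarrow> 'v) \<Rightarrow> 'v \<Rightarrow> bool" where
  "inf_emitter src v \<longleftrightarrow> infinite {e. src e = v}"

definition bpaths :: "('e \<Rightarrow> 'v) \<Rightarrow> ('e \<Rightarrow> 'v) \<Rightarrow> ('v, 'e) gpath set" where
  "bpaths src rng = infpaths src rng
     \<union> {\<mu> \<in> finpaths src rng. sink src (grng rng \<mu>)}
     \<union> {\<mu> \<in> finpaths src rng. inf_emitter src (grng rng \<mu>)}"

fun gcat :: "('v, 'e) gpath \<Rightarrow> ('v, 'e) gpath \<Rightarrow> ('v, 'e) gpath" where
  "gcat (Fin v es) (Fin w fs) = Fin v (es @ fs)"
| "gcat (Fin v es) (Inf f) = Inf (\<lambda>i. if i < length es then es ! i else f (i - length es))"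
| "gcat (Inf f) _ = Inf f"

definition graph_groupoid ::
  "('e \<Rightarrow> 'v) \<Rightarrow> ('e \<Rightarrow> 'v) \<Rightarrow> (('v, 'e) gpath \<times> int \<times> ('v, 'e) gpath) set" where
  "graph_groupoid src rng =
     {(gcat \<alpha> x, int (glen \<alpha>) - int (glen \<beta>), gcat \<beta> x) | \<alpha> \<beta> x.
        \<alpha> \<in> finpaths src rng \<and> \<beta> \<in> finpaths src rng \<and> x \<in> bpaths src rng \<and>
        grng rng \<alpha> = gsrc src x \<and> grng rng \<beta> = gsrc src x}"

definition cyl :: "('e \<Rightarrow> 'v) \<Rightarrow> ('e \<Rightarrow> 'v) \<Rightarrow> ('v, 'e) gpath \<Rightarrow> ('v, 'e) gpath set" where
  "cyl src rng \<mu> = {gcat \<mu> x | x. x \<in> bpaths src rng \<and> gsrc src x = grng rng \<mu>}"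

fun gsnoc :: "('v, 'e) gpath \<Rightarrow> 'e \<Rightarrow> ('v, 'e) gpath" where
  "gsnoc (Fin v es) e = Fin v (es @ [e])"
| "gsnoc (Inf f) e = Inf f"

definition basis_sets :: "('e \<Rightarrow> 'v) \<Rightarrow> ('e \<Rightarrow> 'v) \<Rightarrow> ('v, 'e) gpath set set" where
  "basis_sets src rng =
     {cyl src rng \<mu> - (\<Union>e\<in>F. cyl src rng (gsnoc \<mu> e)) | \<mu> F.
        \<mu> \<in> finpaths src rng \<and> finite F \<and> F \<subseteq> {e. src e = grng rng \<mu>}}"

text \<open>The topology on the unit space G_E^(0), identified with X.\<close>
definition unit_top :: "('e \<Rightarrow> 'v) \<Rightarrow> ('e \<Rightarrow> 'v) \<Rightarrow> ('v, 'e) gpath topology" where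
  "unit_top src rng = topology_generated_by (basis_sets src rng)"

text \<open>Invariant subsets of the unit space (units (x,0,x) identified with x).\<close>
definition invariant :: "('e \<Rightarrow> 'v) \<Rightarrow> ('e \<Rightarrow> 'v) \<Rightarrow> ('v, 'e) gpath set \<Rightarrow> bool" where
  "invariant src rng U \<longleftrightarrow> U \<subseteq> bpaths src rng \<and>
     (\<forall>(x, k, y) \<in> graph_groupoid src rng. y \<in> U \<longleftrightarrow> x \<in> U)"

definition compact_open_invariant ::
  "('e \<Rightarrow> 'v) \<Rightarrow> ('e \<Rightarrow> 'v) \<Rightarrow> ('v, 'e) gpath set \<Rightarrow> bool" where
  "compact_open_invariant src rng U \<longleftrightarrow>
     compactin (unit_top src rng) U \<and> openin (unit_top src rng) U \<and> invariant src rng U"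

definition minimal_coi ::
  "('e \<Rightarrow> 'v) \<Rightarrow> ('e \<Rightarrow> 'v) \<Rightarrow> ('v, 'e) gpath set \<Rightarrow> bool" where
  "minimal_coi src rng V \<longleftrightarrow> V \<noteq> {} \<and> compact_open_invariant src rng V \<and>
     (\<forall>W. W \<noteq> {} \<and> W \<subseteq> V \<and> compact_open_invariant src rng W \<longrightarrow> W = V)"

end

theory Submission
  imports Defs
begin


fun ed :: "('v,'e) gpath \<Rightarrow> nat \<Rightarrow> 'e option" where
  "ed (Fin v es) i = (if i < length es then Some (es!i) else None)"
| "ed (Inf f) i = Some (f i)"

lemma ed_gcat: "ed (gcat (Fin v es) x) i = (if i < length es then Some (es!i) else ed x (i - length es))"
  by (cases x) (auto simp: nth_append)

lemma finpaths_Fin: "Fin v es \<in> finpaths src rng \<longleftrightarrow>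
   (es \<noteq> [] \<longrightarrow> src (hd es) = v) \<and> (\<forall>i. Suc i < length es \<longrightarrow> rng (es ! i) = src (es ! Suc i))"
  by (simp add: finpaths_def)

lemma finpaths_Inf[simp]: "Inf f \<notin> finpaths src rng"
  by (simp add: finpaths_def)

lemma infpaths_Inf: "Inf f \<in> infpaths src rng \<longleftrightarrow> (\<forall>i. rng (f i) = src (f (Suc i)))"
  by (simp add: infpaths_def)

lemma infpaths_Fin[simp]: "Fin v es \<notin> infpaths src rng"
  by (simp add: infpaths_def)

lemma bpaths_Fin: "Fin v es \<in> bpaths src rng \<longleftrightarrow> Fin v es \<in> finpaths src rng \<and>
   (sink src (grng rng (Fin v es)) \<or> inf_emitter src (grng rng (Fin v es)))"
  by (auto simp: bpaths_def)

lemma bpaths_Inf: "Inf f \<in> bpaths src rng \<longleftrightarrow> (\<forall>i. rng (f i) = src (f (Suc i)))"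
  by (auto simp: bpaths_def infpaths_Inf)

lemma grng_Fin_rng: "es \<noteq> [] \<Longrightarrow> grng rng (Fin v es) = rng (es ! (length es - 1))"
  by (simp add: last_conv_nth)

lemma gcat_Fin_fin:
  assumes mu: "Fin v es \<in> finpaths src rng" and x: "Fin w fs \<in> finpaths src rng"
    and eq: "grng rng (Fin v es) = w"
  shows "Fin v (es @ fs) \<in> finpaths src rng \<and> grng rng (Fin v (es @ fs)) = grng rng (Fin w fs)"
proof -
  have A: "es \<noteq> [] \<longrightarrow> src (hd es) = v" "\<forall>i. Suc i < length es \<longrightarrow> rng (es ! i) = src (es ! Suc i)"
    using mu by (auto simp: finpaths_Fin)
  have B: "fs \<noteq> [] \<longrightarrow> src (hd fs) = w" "\<forall>i. Suc i < length fs \<longrightarrow> rng (fs ! i) = src (fs ! Suc i)"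
    using x by (auto simp: finpaths_Fin)
  have C: "\<forall>i. Suc i < length (es @ fs) \<longrightarrow> rng ((es@fs) ! i) = src ((es@fs) ! Suc i)"
  proof (intro allI impI)
    fix i assume i: "Suc i < length (es @ fs)"
    consider "Suc i < length es" | "Suc i = length es" | "length es \<le> i" by linarith
    then show "rng ((es@fs) ! i) = src ((es@fs) ! Suc i)"
    proof cases
      case 1 then show ?thesis using A by (simp add: nth_append)
    next
      case 2
      then have "fs \<noteq> []" using i by auto
      moreover have "es \<noteq> []" "last es = es ! i" using 2 by (auto, metis diff_Suc_1 last_conv_nth list.size(3) nat.distinct(1))
      ultimately show ?thesis using 2 B eq by (auto simp: nth_append hd_conv_nth)
    next
      case 3
      then have "Suc (i - length es) < length fs" using i by auto
      then show ?thesis using 3 B(2)[rule_format, of "i - length es"]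
        by (simp add: nth_append Suc_diff_le)
    qed
  qed
  have D: "es @ fs \<noteq> [] \<longrightarrow> src (hd (es @ fs)) = v"
    using A B eq by (cases es) auto
  show ?thesis using C D eq by (auto simp: finpaths_Fin)
qed

lemma gcat_bp:
  assumes mu: "mu \<in> finpaths src rng" and x: "x \<in> bpaths src rng"
    and eq: "grng rng mu = gsrc src x"
  shows "gcat mu x \<in> bpaths src rng \<and> gsrc src (gcat mu x) = gsrc src mu"
proof -
  obtain v es where m: "mu = Fin v es" using mu by (cases mu) auto
  have A: "es \<noteq> [] \<longrightarrow> src (hd es) = v" "\<forall>i. Suc i < length es \<longrightarrow> rng (es ! i) = src (es ! Suc i)"
    using mu m by (auto simp: finpaths_Fin)
  show ?thesis
  proof (cases x)
    case (Fin w fs)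
    then show ?thesis using gcat_Fin_fin[of v es src rng w fs] x mu m eq
      by (auto simp: bpaths_Fin)
  next
    case (Inf f)
    have f: "\<forall>i. rng (f i) = src (f (Suc i))" using x Inf by (simp add: bpaths_Inf)
    let ?g = "\<lambda>i. if i < length es then es ! i else f (i - length es)"
    have "\<forall>i. rng (?g i) = src (?g (Suc i))"
    proof
      fix i
      consider "Suc i < length es" | "Suc i = length es" | "length es \<le> i" by linarith
      then show "rng (?g i) = src (?g (Suc i))"
      proof cases
        case 1 then show ?thesis using A by simp
      next
        case 2
        moreover have "es \<noteq> []" "last es = es ! i" using 2 by (auto, metis diff_Suc_1 last_conv_nth list.size(3) nat.distinct(1))
        ultimately show ?thesis using eq m Inf by auto
      next
        case 3 then show ?thesis using f[rule_format, of "i - length es"] by (simp add: Suc_diff_le)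
      qed
    qed
    moreover have "src (?g 0) = v" using A eq m Inf by (cases es) auto
    ultimately show ?thesis using m Inf by (simp add: bpaths_Inf)
  qed
qed


lemma last_nth_Suc: "Suc i = length es \<Longrightarrow> last es = es ! i"
  by (metis diff_Suc_1 last_conv_nth list.size(3) nat.distinct(1))

lemma drop_Inf:
  assumes mu: "Fin v es \<in> finpaths src rng" and p: "Inf g \<in> bpaths src rng"
    and s: "src (g 0) = v" and pre: "\<forall>i<length es. g i = es ! i"
  shows "\<exists>x. x \<in> bpaths src rng \<and> gsrc src x = grng rng (Fin v es) \<and> Inf g = gcat (Fin v es) x"
proof -
  have g: "\<forall>i. rng (g i) = src (g (Suc i))" using p by (simp add: bpaths_Inf)
  let ?k = "length es"
  let ?x = "Inf (\<lambda>i. g (i + ?k))"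
  have 1: "?x \<in> bpaths src rng" using g by (simp add: bpaths_Inf)
  have 2: "gsrc src ?x = grng rng (Fin v es)"
  proof (cases "es = []")
    case True then show ?thesis using s by simp
  next
    case False
    then have "Suc (?k - 1) = ?k" by simp
    then have "rng (g (?k - 1)) = src (g ?k)" using g[rule_format, of "?k - 1"] by simp
    moreover have "g (?k - 1) = last es" using pre False by (simp add: last_conv_nth)
    ultimately show ?thesis using False by simp
  qed
  have 3: "Inf g = gcat (Fin v es) ?x" using pre by (simp add: fun_eq_iff)
  show ?thesis using 1 2 3 by blast
qed

lemma drop_Fin:
  assumes mu: "Fin v es \<in> finpaths src rng" and p: "Fin v fs \<in> bpaths src rng"
    and len: "length es \<le> length fs" and pre: "\<forall>i<length es. fs ! i = es ! i"
  shows "\<exists>x. x \<in> bpaths src rng \<and> gsrc src x = grng rng (Fin v es) \<and> Fin v fs = gcat (Fin v es) x"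
proof -
  let ?k = "length es"
  let ?d = "drop ?k fs"
  have fse: "fs = es @ ?d"
    by (rule nth_equalityI) (use len pre in \<open>auto simp: nth_append\<close>)
  have B: "fs \<noteq> [] \<longrightarrow> src (hd fs) = v" "\<forall>i. Suc i < length fs \<longrightarrow> rng (fs ! i) = src (fs ! Suc i)"
      "sink src (grng rng (Fin v fs)) \<or> inf_emitter src (grng rng (Fin v fs))"
    using p by (auto simp: bpaths_Fin finpaths_Fin)
  let ?x = "Fin (grng rng (Fin v es)) ?d"
  have x1: "?x \<in> finpaths src rng"
    unfolding finpaths_Fin
  proof (intro conjI allI impI)
    assume ne: "?d \<noteq> []"
    then have kl: "?k < length fs" by simp
    have hd: "hd ?d = fs ! ?k" using kl by (simp add: hd_drop_conv_nth)
    show "src (hd ?d) = grng rng (Fin v es)"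
    proof (cases "es = []")
      case True
      then have "fs \<noteq> []" using kl by auto
      then show ?thesis using B(1) True hd by (simp add: hd_conv_nth)
    next
      case False
      then have sk: "Suc (?k - 1) = ?k" by simp
      then have "rng (fs ! (?k - 1)) = src (fs ! ?k)" using B(2)[rule_format, of "?k - 1"] kl by simp
      moreover have "fs ! (?k - 1) = es ! (?k - 1)" using pre False by simp
      moreover have "last es = es ! (?k - 1)" using False by (simp add: last_conv_nth)
      ultimately show ?thesis using False hd by simp
    qed
  next
    fix i assume "Suc i < length ?d"
    then show "rng (?d ! i) = src (?d ! Suc i)"
      using B(2)[rule_format, of "?k + i"] by simp
  qed
  have gr: "grng rng ?x = grng rng (Fin v fs)"
  proof (cases "?d = []")
    case True
    then have "fs = es" using fse by (simp only: append_Nil2)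
    then show ?thesis using True by simp
  next
    case False
    then have "last fs = last ?d" by (simp add: last_drop)
    then show ?thesis using False by auto
  qed
  have "?x \<in> bpaths src rng" using x1 gr B(3) by (simp only: bpaths_Fin)
  moreover have "Fin v fs = gcat (Fin v es) ?x"
    by (simp only: gcat.simps) (rule arg_cong[where f="Fin v"], rule fse)
  ultimately show ?thesis by auto
qed

lemma drop_bp:
  assumes mu: "mu \<in> finpaths src rng" and p: "p \<in> bpaths src rng"
    and s: "gsrc src p = gsrc src mu" and a: "\<forall>i<glen mu. ed p i = ed mu i"
  shows "\<exists>x. x \<in> bpaths src rng \<and> gsrc src x = grng rng mu \<and> p = gcat mu x"
proof -
  obtain v es where m: "mu = Fin v es" using mu by (cases mu) auto
  show ?thesis
  proof (cases p)
    case (Fin w fs)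
    have w: "w = v" using s Fin m by simp
    have len: "length es \<le> length fs"
    proof (rule ccontr)
      assume c: "\<not> length es \<le> length fs"
      then have "ed p (length fs) = ed mu (length fs)" using a m by simp
      then show False using Fin m c by simp
    qed
    have pre: "\<forall>i<length es. fs ! i = es ! i"
    proof (intro allI impI)
      fix i assume i: "i < length es"
      then have "ed p i = ed mu i" using a m by simp
      then show "fs ! i = es ! i" using Fin m i len by simp
    qed
    show ?thesis using drop_Fin[of v es src rng fs] mu p Fin m w len pre by simp
  next
    case (Inf g)
    have pre: "\<forall>i<length es. g i = es ! i"
    proof (intro allI impI)
      fix i assume i: "i < length es"
      then have "ed p i = ed mu i" using a m by simp
      then show "g i = es ! i" using Inf m i by simp
    qed
    show ?thesis using drop_Inf[of v es src rng g] mu p Inf m pre s by simp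
  qed
qed

lemma gsrc_gcat0: "gsrc src x = v \<Longrightarrow> gcat (Fin v []) x = x"
  by (cases x) auto

lemma cyl_char:
  assumes mu: "mu \<in> finpaths src rng"
  shows "cyl src rng mu = {p \<in> bpaths src rng. gsrc src p = gsrc src mu \<and> (\<forall>i<glen mu. ed p i = ed mu i)}"
proof -
  obtain v es where m: "mu = Fin v es" using mu by (cases mu) auto
  show ?thesis
  proof (intro set_eqI iffI)
    fix p assume "p \<in> cyl src rng mu"
    then obtain x where x: "p = gcat mu x" "x \<in> bpaths src rng" "gsrc src x = grng rng mu"
      unfolding cyl_def by auto
    then show "p \<in> {p \<in> bpaths src rng. gsrc src p = gsrc src mu \<and> (\<forall>i<glen mu. ed p i = ed mu i)}"
      using gcat_bp[OF mu x(2)] m by (auto simp: ed_gcat)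
  next
    fix p assume "p \<in> {p \<in> bpaths src rng. gsrc src p = gsrc src mu \<and> (\<forall>i<glen mu. ed p i = ed mu i)}"
    then show "p \<in> cyl src rng mu" using drop_bp[OF mu, of p] unfolding cyl_def by auto
  qed
qed



lemma basis_open: "B \<in> basis_sets src rng \<Longrightarrow> openin (unit_top src rng) B"
  unfolding unit_top_def by (rule topology_generated_by_Basis)

lemma cyl_basis: "mu \<in> finpaths src rng \<Longrightarrow> cyl src rng mu \<in> basis_sets src rng"
  unfolding basis_sets_def by (rule CollectI, rule exI[of _ mu], rule exI[of _ "{}"]) simp

lemma cyl_open: "mu \<in> finpaths src rng \<Longrightarrow> openin (unit_top src rng) (cyl src rng mu)"
  by (rule basis_open, rule cyl_basis)

lemma vert_fin[simp]: "Fin v [] \<in> finpaths src rng"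
  by (simp add: finpaths_Fin)

lemma cyl_vert: "cyl src rng (Fin v []) = {p \<in> bpaths src rng. gsrc src p = v}"
  by (simp add: cyl_char)

lemma cyl_sub: "mu \<in> finpaths src rng \<Longrightarrow> cyl src rng mu \<subseteq> bpaths src rng"
  by (simp add: cyl_char)

lemma topspace_sub: "topspace (unit_top src rng) \<subseteq> bpaths src rng"
proof -
  have "\<forall>B\<in>basis_sets src rng. B \<subseteq> bpaths src rng"
    unfolding basis_sets_def using cyl_sub by blast
  then show ?thesis unfolding unit_top_def by auto
qed

definition pre :: "('e \<Rightarrow> 'v) \<Rightarrow> ('v,'e) gpath \<Rightarrow> nat \<Rightarrow> ('v,'e) gpath" where
  "pre src p n = Fin (gsrc src p) (map (\<lambda>j. the (ed p j)) [0..<n])"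

lemma ed_pre: "ed (pre src p n) i = (if i < n then Some (the (ed p i)) else None)"
  by (simp add: pre_def)

lemma pre_Suc: "pre src p (Suc n) = gsnoc (pre src p n) (the (ed p n))"
  by (simp add: pre_def)

lemma pre_fin:
  assumes p: "p \<in> bpaths src rng" and nn: "\<forall>j<n. ed p j \<noteq> None"
  shows "pre src p n \<in> finpaths src rng \<and> p \<in> cyl src rng (pre src p n)"
proof -
  have fp: "pre src p n \<in> finpaths src rng"
  proof (cases p)
    case (Fin v es)
    have B: "es \<noteq> [] \<longrightarrow> src (hd es) = v" "\<forall>i. Suc i < length es \<longrightarrow> rng (es ! i) = src (es ! Suc i)"
      using p Fin by (auto simp: bpaths_Fin finpaths_Fin)
    have ln: "n \<le> length es"
    proof (rule ccontr)
      assume "\<not> n \<le> length es"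
      then have "ed p (length es) \<noteq> None" using nn by simp
      then show False using Fin by simp
    qed
    have eqm: "map (\<lambda>j. the (ed p j)) [0..<n] = take n es"
      by (rule nth_equalityI) (use ln Fin in auto)
    show ?thesis unfolding pre_def eqm finpaths_Fin using B Fin ln
      by (auto simp: hd_conv_nth)
  next
    case (Inf f)
    have g: "\<forall>i. rng (f i) = src (f (Suc i))" using p Inf by (simp add: bpaths_Inf)
    show ?thesis unfolding pre_def finpaths_Fin using g Inf by (auto simp: hd_conv_nth)
  qed
  moreover have "p \<in> cyl src rng (pre src p n)"
    using fp p nn by (auto simp: cyl_char ed_pre pre_def)
  ultimately show ?thesis by blast
qed

lemma ed_None_mono: "ed p j = None \<Longrightarrow> j \<le> k \<Longrightarrow> ed p k = None"
  by (cases p) (auto split: if_splits)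

lemma gpath_ext: "gsrc src p = gsrc src q \<Longrightarrow> ed p = ed q \<Longrightarrow> p = q"
proof (cases p; cases q)
  fix v es w fs assume e: "gsrc src p = gsrc src q" "ed p = ed q" and P: "p = Fin v es" and Q: "q = Fin w fs"
  have L: "length es = length fs"
  proof (rule ccontr)
    assume "length es \<noteq> length fs"
    then have "length es < length fs \<or> length fs < length es" by linarith
    then show False
    proof
      assume "length es < length fs"
      then have "ed p (length es) \<noteq> ed q (length es)" using P Q by simp
      then show False using e by simp
    next
      assume "length fs < length es"
      then have "ed p (length fs) \<noteq> ed q (length fs)" using P Q by simp
      then show False using e by simp
    qed
  qed
  have "\<forall>i<length es. es ! i = fs ! i"
  proof (intro allI impI)
    fix i assume "i < length es"
    then have "ed p i = ed q i" using e by simp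
    then show "es ! i = fs ! i" using P Q L \<open>i < length es\<close> by simp
  qed
  then have "es = fs" using L by (simp add: nth_equalityI)
  then show "p = q" using e P Q by simp
next
  fix v es g assume e: "gsrc src p = gsrc src q" "ed p = ed q" and P: "p = Fin v es" and Q: "q = Inf g"
  have "ed p (length es) = ed q (length es)" using e by simp
  then show "p = q" using P Q by simp
next
  fix f w fs assume e: "gsrc src p = gsrc src q" "ed p = ed q" and P: "p = Inf f" and Q: "q = Fin w fs"
  have "ed p (length fs) = ed q (length fs)" using e by simp
  then show "p = q" using P Q by simp
next
  fix f g assume e: "gsrc src p = gsrc src q" "ed p = ed q" and P: "p = Inf f" and Q: "q = Inf g"
  have "f = g"
  proof
    fix i show "f i = g i" using fun_cong[OF e(2), of i] P Q by simp
  qed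
  then show "p = q" using P Q by simp
qed

lemma snoc_src:
  assumes "Fin v (es @ [b]) \<in> finpaths src rng"
  shows "src b = grng rng (Fin v es)"
proof (cases "es = []")
  case True then show ?thesis using assms by (simp add: finpaths_Fin)
next
  case False
  then have sk: "Suc (length es - 1) < length (es @ [b])" by simp
  have "rng ((es@[b]) ! (length es - 1)) = src ((es@[b]) ! Suc (length es - 1))"
    using assms sk unfolding finpaths_Fin by blast
  moreover have "Suc (length es - 1) = length es" using False by simp
  ultimately show ?thesis using False by (simp add: nth_append last_conv_nth)
qed



lemma sep_none:
  assumes x: "x \<in> bpaths src rng" and y: "y \<in> bpaths src rng"
    and s: "gsrc src x = gsrc src y" and agree: "\<forall>j<i. ed x j = ed y j"
    and nn: "\<forall>j<i. ed x j \<noteq> None"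
    and xi: "ed x i = None" and yi: "ed y i = Some b"
  shows "\<exists>A B. openin (unit_top src rng) A \<and> openin (unit_top src rng) B \<and> x \<in> A \<and> y \<in> B \<and> disjnt A B"
proof -
  have nny: "\<forall>j<Suc i. ed y j \<noteq> None" using agree nn yi by (auto simp: less_Suc_eq)
  have py: "pre src y (Suc i) \<in> finpaths src rng \<and> y \<in> cyl src rng (pre src y (Suc i))"
    by (rule pre_fin[OF y nny])
  have px: "pre src x i \<in> finpaths src rng \<and> x \<in> cyl src rng (pre src x i)"
    by (rule pre_fin[OF x nn])
  have mu: "pre src x i = pre src y i" using s agree unfolding pre_def by (simp add: map_eq_conv)
  have snoc: "pre src y (Suc i) = gsnoc (pre src x i) b" using mu yi by (simp add: pre_Suc)
  have sb: "src b = grng rng (pre src x i)"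
  proof -
    obtain v es where pe: "pre src x i = Fin v es" by (simp add: pre_def)
    have "Fin v (es @ [b]) \<in> finpaths src rng" using py snoc pe by simp
    then show ?thesis using pe snoc_src by metis
  qed
  let ?A = "cyl src rng (pre src x i) - (\<Union>e\<in>{b}. cyl src rng (gsnoc (pre src x i) e))"
  have "?A \<in> basis_sets src rng"
    unfolding basis_sets_def
    by (rule CollectI, rule exI[of _ "pre src x i"], rule exI[of _ "{b}"]) (use px sb in simp)
  then have oA: "openin (unit_top src rng) ?A" by (rule basis_open)
  have oB: "openin (unit_top src rng) (cyl src rng (pre src y (Suc i)))"
    using py by (simp add: cyl_open)
  have xnot: "x \<notin> cyl src rng (pre src y (Suc i))"
  proof
    assume "x \<in> cyl src rng (pre src y (Suc i))"
    then have "ed x i = ed (pre src y (Suc i)) i" using py by (simp add: cyl_char pre_def)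
    then show False using xi by (simp add: ed_pre)
  qed
  have "x \<in> ?A" using px xnot snoc by simp
  moreover have "disjnt ?A (cyl src rng (pre src y (Suc i)))" using snoc by (auto simp: disjnt_def)
  ultimately show ?thesis using oA oB py by (intro exI[of _ ?A] exI[of _ "cyl src rng (pre src y (Suc i))"]) simp
qed

lemma unit_top_Hausdorff: "Hausdorff_space (unit_top src rng)"
  unfolding Hausdorff_space_def
proof (intro allI impI)
  fix x y assume a: "x \<in> topspace (unit_top src rng) \<and> y \<in> topspace (unit_top src rng) \<and> x \<noteq> y"
  then have x: "x \<in> bpaths src rng" and y: "y \<in> bpaths src rng" using topspace_sub by blast+
  show "\<exists>A B. openin (unit_top src rng) A \<and> openin (unit_top src rng) B \<and> x \<in> A \<and> y \<in> B \<and> disjnt A B"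
  proof (cases "gsrc src x = gsrc src y")
    case False
    let ?A = "cyl src rng (Fin (gsrc src x) [])" and ?B = "cyl src rng (Fin (gsrc src y) [])"
    have "openin (unit_top src rng) ?A" "openin (unit_top src rng) ?B" by (simp_all add: cyl_open)
    moreover have "x \<in> ?A" "y \<in> ?B" using x y by (simp_all add: cyl_vert)
    moreover have "disjnt ?A ?B" using False by (auto simp: cyl_vert disjnt_def)
    ultimately show ?thesis by (intro exI[of _ ?A] exI[of _ ?B]) simp
  next
    case True
    have "ed x \<noteq> ed y" using gpath_ext[OF True] a by auto
    then have ex: "\<exists>i. ed x i \<noteq> ed y i" by auto
    define i where "i = (LEAST i. ed x i \<noteq> ed y i)"
    have di: "ed x i \<noteq> ed y i" unfolding i_def by (rule LeastI_ex[OF ex])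
    have agree: "\<forall>j<i. ed x j = ed y j" unfolding i_def using not_less_Least by blast
    have nn: "\<forall>j<i. ed x j \<noteq> None"
    proof (intro allI impI)
      fix j assume j: "j < i"
      show "ed x j \<noteq> None"
      proof
        assume n: "ed x j = None"
        then have "ed y j = None" using agree j by simp
        then have "ed y i = None" using ed_None_mono[of y j i] j by simp
        moreover have "ed x i = None" using ed_None_mono[of x j i] n j by simp
        ultimately show False using di by simp
      qed
    qed
    have nny: "\<forall>j<i. ed y j \<noteq> None" using nn agree by simp
    show ?thesis
    proof (cases "ed x i")
      case None
      then obtain b where yi: "ed y i = Some b" using di by (cases "ed y i") auto
      show ?thesis by (rule sep_none[OF x y True agree nn None yi])
    next
      case (Some a)
      show ?thesis
      proof (cases "ed y i")
        case None
        have agree': "\<forall>j<i. ed y j = ed x j" using agree by simp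
        have "\<exists>A B. openin (unit_top src rng) A \<and> openin (unit_top src rng) B \<and> y \<in> A \<and> x \<in> B \<and> disjnt A B"
          by (rule sep_none[OF y x True[symmetric] agree' nny None Some])
        then show ?thesis using disjnt_sym by blast
      next
        case (Some b)
        have ab: "a \<noteq> b" using Some \<open>ed x i = Some a\<close> di by simp
        have nx: "\<forall>j<Suc i. ed x j \<noteq> None" using nn \<open>ed x i = Some a\<close> by (auto simp: less_Suc_eq)
        have ny: "\<forall>j<Suc i. ed y j \<noteq> None" using nny Some by (auto simp: less_Suc_eq)
        note px = pre_fin[OF x nx] and py = pre_fin[OF y ny]
        let ?A = "cyl src rng (pre src x (Suc i))" and ?B = "cyl src rng (pre src y (Suc i))"
        have "openin (unit_top src rng) ?A" "openin (unit_top src rng) ?B" using px py by (simp_all add: cyl_open)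
        moreover have "disjnt ?A ?B"
        proof -
          have "\<forall>z\<in>?A. ed z i = Some a" using px \<open>ed x i = Some a\<close> by (auto simp: cyl_char ed_pre pre_def)
          moreover have "\<forall>z\<in>?B. ed z i = Some b" using py Some by (auto simp: cyl_char ed_pre pre_def)
          ultimately show ?thesis using ab by (auto simp: disjnt_def)
        qed
        ultimately show ?thesis using px py by (intro exI[of _ ?A] exI[of _ ?B]) simp
      qed
    qed
  qed
qed



lemma inv_gcat:
  fixes src rng :: "'e \<Rightarrow> 'v" and z :: "('v,'e) gpath"
  assumes W: "invariant src rng W" and a: "alpha \<in> finpaths src rng" and z: "z \<in> bpaths src rng"
    and r: "grng rng alpha = gsrc src z"
  shows "gcat alpha z \<in> W \<longleftrightarrow> z \<in> W"
proof -
  let ?b = "Fin (gsrc src z) [] :: ('v,'e) gpath"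
  have "(gcat alpha z, int (glen alpha) - int (glen ?b), gcat ?b z) \<in> graph_groupoid src rng"
    unfolding graph_groupoid_def using a z r by (intro CollectI exI[of _ alpha] exI[of _ ?b] exI[of _ z]) simp
  moreover have "gcat ?b z = z" by (rule gsrc_gcat0) simp
  ultimately have "(gcat alpha z, int (glen alpha) - int (glen ?b), z) \<in> graph_groupoid src rng" by simp
  then show ?thesis using W unfolding invariant_def by fast
qed

lemma finite_src:
  assumes c: "compactin (unit_top src rng) U"
  shows "finite (gsrc src ` U)"
proof -
  let ?C = "range (\<lambda>v. cyl src rng (Fin v []))"
  have U: "U \<subseteq> bpaths src rng" using compactin_subset_topspace[OF c] topspace_sub by blast
  have "U \<subseteq> \<Union>?C"
  proof
    fix x assume "x \<in> U"
    then have "x \<in> cyl src rng (Fin (gsrc src x) [])" using U by (auto simp: cyl_vert)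
    then show "x \<in> \<Union>?C" by blast
  qed
  moreover have "\<forall>B\<in>?C. openin (unit_top src rng) B" by (auto simp: cyl_open)
  ultimately obtain F where F: "finite F" "F \<subseteq> ?C" "U \<subseteq> \<Union>F"
    using c unfolding compactin_def by meson
  then obtain V where V: "finite V" "F = (\<lambda>v. cyl src rng (Fin v [])) ` V"
    using finite_subset_image[OF F(1) F(2)] by auto
  have "gsrc src ` U \<subseteq> V"
  proof
    fix v assume "v \<in> gsrc src ` U"
    then obtain x where x: "x \<in> U" "v = gsrc src x" by auto
    then obtain w where "w \<in> V" "x \<in> cyl src rng (Fin w [])" using F(3) V(2) by auto
    then show "v \<in> V" using x by (simp add: cyl_vert)
  qed
  then show ?thesis using V(1) finite_subset by blast
qed

lemma snoc_fin:
  assumes "Fin v es \<in> finpaths src rng" "src e = grng rng (Fin v es)"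
  shows "Fin v (es @ [e]) \<in> finpaths src rng"
proof -
  have "Fin (src e) [e] \<in> finpaths src rng" by (simp add: finpaths_Fin)
  then show ?thesis using gcat_Fin_fin[OF assms(1), of "src e" "[e]"] assms(2) by simp
qed

lemma open_inf_gen:
  assumes "generate_topology_on (basis_sets src rng) W"
  shows "\<forall>f. Inf f \<in> W \<longrightarrow> (\<exists>n. \<forall>m\<ge>n. \<forall>z\<in>bpaths src rng.
            (gsrc src z = src (f 0) \<and> (\<forall>i<m. ed z i = Some (f i))) \<longrightarrow> z \<in> W)"
  using assms
proof (induction rule: generate_topology_on.induct)
  case Empty then show ?case by simp
next
  case (Int a b)
  show ?case
  proof (intro allI impI)
    fix f assume fab: "Inf f \<in> a \<inter> b"
    then have fa: "Inf f \<in> a" and fb: "Inf f \<in> b" by auto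
    from Int.IH(1)[rule_format, OF fa] obtain n1 where
      n1: "\<forall>m\<ge>n1. \<forall>z\<in>bpaths src rng. (gsrc src z = src (f 0) \<and> (\<forall>i<m. ed z i = Some (f i))) \<longrightarrow> z \<in> a"
      by (rule exE)
    from Int.IH(2)[rule_format, OF fb] obtain n2 where
      n2: "\<forall>m\<ge>n2. \<forall>z\<in>bpaths src rng. (gsrc src z = src (f 0) \<and> (\<forall>i<m. ed z i = Some (f i))) \<longrightarrow> z \<in> b"
      by (rule exE)
    show "\<exists>n. \<forall>m\<ge>n. \<forall>z\<in>bpaths src rng. (gsrc src z = src (f 0) \<and> (\<forall>i<m. ed z i = Some (f i))) \<longrightarrow> z \<in> a \<inter> b"
      by (rule exI[of _ "max n1 n2"]) (use n1 n2 in auto)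
  qed
next
  case (UN K)
  show ?case
  proof (intro allI impI)
    fix f assume "Inf f \<in> \<Union>K"
    then obtain k where "k \<in> K" "Inf f \<in> k" by auto
    from UN.IH[OF \<open>k \<in> K\<close>, rule_format, OF \<open>Inf f \<in> k\<close>] obtain n where
      "\<forall>m\<ge>n. \<forall>z\<in>bpaths src rng. (gsrc src z = src (f 0) \<and> (\<forall>i<m. ed z i = Some (f i))) \<longrightarrow> z \<in> k"
      by (rule exE)
    then show "\<exists>n. \<forall>m\<ge>n. \<forall>z\<in>bpaths src rng. (gsrc src z = src (f 0) \<and> (\<forall>i<m. ed z i = Some (f i))) \<longrightarrow> z \<in> \<Union>K"
      using \<open>k \<in> K\<close> by blast
  qed
next
  case (Basis s)
  then obtain mu F where s: "s = cyl src rng mu - (\<Union>e\<in>F. cyl src rng (gsnoc mu e))"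
    and mu: "mu \<in> finpaths src rng" and F: "F \<subseteq> {e. src e = grng rng mu}"
    unfolding basis_sets_def by blast
  obtain v es where m: "mu = Fin v es" using mu by (cases mu) auto
  show ?case
  proof (intro allI impI)
    fix f assume fs: "Inf f \<in> s"
    let ?k = "length es"
    have inmu: "Inf f \<in> cyl src rng mu" using fs s by simp
    then have fb: "Inf f \<in> bpaths src rng" and f0: "src (f 0) = v" and fe: "\<forall>i<?k. f i = es ! i"
      using mu m by (auto simp: cyl_char)
    have pk: "pre src (Inf f) (Suc ?k) = gsnoc mu (f ?k)"
    proof -
      have "map f [0..<?k] = es" by (rule nth_equalityI) (use fe in simp_all)
      then show ?thesis using m f0 by (simp add: pre_def)
    qed
    have "Inf f \<in> cyl src rng (pre src (Inf f) (Suc ?k))" using pre_fin[OF fb] by simp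
    then have fkF: "f ?k \<notin> F" using fs s pk by auto
    show "\<exists>n. \<forall>m\<ge>n. \<forall>z\<in>bpaths src rng. (gsrc src z = src (f 0) \<and> (\<forall>i<m. ed z i = Some (f i))) \<longrightarrow> z \<in> s"
    proof (intro exI[of _ "Suc ?k"] allI impI ballI)
      fix n z assume n: "Suc ?k \<le> n" and z: "z \<in> bpaths src rng"
        and zc: "gsrc src z = src (f 0) \<and> (\<forall>i<n. ed z i = Some (f i))"
      have z1: "z \<in> cyl src rng mu" using z zc n fe f0 mu m by (auto simp: cyl_char)
      have z2: "z \<notin> cyl src rng (gsnoc mu e)" if e: "e \<in> F" for e
      proof
        assume zin: "z \<in> cyl src rng (gsnoc mu e)"
        have "Fin v (es @ [e]) \<in> finpaths src rng" using snoc_fin[of v es src rng e] mu m F e by auto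
        then have "ed z ?k = Some e" using zin m by (simp add: cyl_char)
        moreover have "ed z ?k = Some (f ?k)" using zc n by simp
        ultimately show False using fkF e by simp
      qed
      show "z \<in> s" using z1 z2 s by blast
    qed
  qed
qed

lemma open_inf:
  assumes "openin (unit_top src rng) W" "Inf f \<in> W"
  shows "\<exists>n. \<forall>z\<in>bpaths src rng. (gsrc src z = src (f 0) \<and> (\<forall>i<n. ed z i = Some (f i))) \<longrightarrow> z \<in> W"
proof -
  have "generate_topology_on (basis_sets src rng) W"
    using assms(1) unfolding unit_top_def by (simp add: openin_topology_generated_by_iff)
  from open_inf_gen[OF this, rule_format, OF assms(2)] obtain n where
    nn: "\<forall>m\<ge>n. \<forall>z\<in>bpaths src rng. (gsrc src z = src (f 0) \<and> (\<forall>i<m. ed z i = Some (f i))) \<longrightarrow> z \<in> W"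
    by (rule exE)
  have "\<forall>z\<in>bpaths src rng. (gsrc src z = src (f 0) \<and> (\<forall>i<n. ed z i = Some (f i))) \<longrightarrow> z \<in> W"
    using spec[OF nn, of n] by simp
  then show ?thesis by (rule exI)
qed



lemma coi_closed: "compact_open_invariant src rng W \<Longrightarrow> closedin (unit_top src rng) W"
  unfolding compact_open_invariant_def using compactin_imp_closedin[OF unit_top_Hausdorff] by blast

lemma inv_Int: "invariant src rng A \<Longrightarrow> invariant src rng B \<Longrightarrow> invariant src rng (A \<inter> B)"
  unfolding invariant_def by auto

lemma inv_Diff: "invariant src rng A \<Longrightarrow> invariant src rng B \<Longrightarrow> invariant src rng (A - B)"
  unfolding invariant_def by auto

lemma coi_Int:
  assumes "compact_open_invariant src rng A" "compact_open_invariant src rng B"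
  shows "compact_open_invariant src rng (A \<inter> B)"
proof -
  have "compactin (unit_top src rng) (A \<inter> B)"
    using compact_Int_closedin[of "unit_top src rng" A B] assms coi_closed[OF assms(2)]
    unfolding compact_open_invariant_def by blast
  moreover have "openin (unit_top src rng) (A \<inter> B)"
    using assms unfolding compact_open_invariant_def by blast
  moreover have "invariant src rng (A \<inter> B)"
    using assms inv_Int unfolding compact_open_invariant_def by blast
  ultimately show ?thesis unfolding compact_open_invariant_def by blast
qed

lemma coi_Diff:
  assumes a: "compact_open_invariant src rng A" and b: "compact_open_invariant src rng B"
  shows "compact_open_invariant src rng (A - B)"
proof -
  have ca: "closedin (unit_top src rng) A" by (rule coi_closed[OF a])
  have cb: "closedin (unit_top src rng) B" by (rule coi_closed[OF b])
  have oa: "openin (unit_top src rng) A" and ob: "openin (unit_top src rng) B"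
    and ka: "compactin (unit_top src rng) A"
    using a b unfolding compact_open_invariant_def by auto
  have "closedin (unit_top src rng) (A - B)" using ca ob by (rule closedin_diff)
  then have "compactin (unit_top src rng) (A - B)"
    using closed_compactin[OF ka, of "A - B"] by blast
  moreover have "openin (unit_top src rng) (A - B)" using oa cb by (rule openin_diff)
  moreover have "invariant src rng (A - B)"
    using a b inv_Diff unfolding compact_open_invariant_def by blast
  ultimately show ?thesis unfolding compact_open_invariant_def by blast
qed

definition code :: "('e \<Rightarrow> 'v) \<Rightarrow> ('e \<Rightarrow> 'v) \<Rightarrow> 'v set \<Rightarrow> ('v,'e) gpath set \<Rightarrow> 'v set \<times> 'v set" where
  "code src rng S W = ({v\<in>S. cyl src rng (Fin v []) \<subseteq> W}, {v\<in>S. Fin v [] \<in> W})"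

lemma code_sub:
  assumes U: "compact_open_invariant src rng U"
    and W1: "compact_open_invariant src rng W1" "W1 \<subseteq> U"
    and W2: "compact_open_invariant src rng W2" "W2 \<subseteq> U"
    and eq: "code src rng (gsrc src ` U) W1 = code src rng (gsrc src ` U) W2"
  shows "W1 \<subseteq> W2"
proof
  let ?S = "gsrc src ` U"
  have i1: "invariant src rng W1" and i2: "invariant src rng W2"
    and o1: "openin (unit_top src rng) W1"
    using W1 W2 unfolding compact_open_invariant_def by auto
  have e1: "{v\<in>?S. cyl src rng (Fin v []) \<subseteq> W1} = {v\<in>?S. cyl src rng (Fin v []) \<subseteq> W2}"
    and e2: "{v\<in>?S. Fin v [] \<in> W1} = {v\<in>?S. Fin v [] \<in> W2}"
    using eq unfolding code_def by simp_all
  have b1: "W1 \<subseteq> bpaths src rng" using i1 unfolding invariant_def by simp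
  fix x assume x: "x \<in> W1"
  have xb: "x \<in> bpaths src rng" using x b1 by blast
  show "x \<in> W2"
  proof (cases x)
    case (Fin v es)
    let ?w = "grng rng x"
    have xf: "x \<in> finpaths src rng" and sw: "sink src ?w \<or> inf_emitter src ?w"
      using xb Fin by (auto simp: bpaths_Fin)
    have wb: "Fin ?w [] \<in> bpaths src rng" using sw by (simp add: bpaths_Fin)
    have xe: "gcat x (Fin ?w []) = x" using Fin by simp
    have "Fin ?w [] \<in> W1" using inv_gcat[OF i1 xf wb] xe x by simp
    moreover have "?w \<in> ?S" using calculation W1(2) by (metis gsrc.simps(1) image_eqI subsetD)
    ultimately have "Fin ?w [] \<in> W2" using e2 by blast
    then show ?thesis using inv_gcat[OF i2 xf wb] xe by simp
  next
    case (Inf f)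
    obtain n where n: "\<forall>z\<in>bpaths src rng. (gsrc src z = src (f 0) \<and> (\<forall>i<n. ed z i = Some (f i))) \<longrightarrow> z \<in> W1"
      using open_inf[OF o1] x Inf by blast
    have nn: "\<forall>j<n. ed x j \<noteq> None" using Inf by simp
    note pf = pre_fin[OF xb nn]
    let ?mu = "pre src x n"
    have mu: "?mu \<in> finpaths src rng" using pf by simp
    obtain t where t: "x = gcat ?mu t" "t \<in> bpaths src rng" "gsrc src t = grng rng ?mu"
      using pf unfolding cyl_def by blast
    let ?w = "grng rng ?mu"
    have tW1: "t \<in> W1" using inv_gcat[OF i1 mu t(2) t(3)[symmetric]] t(1) x by simp
    have "?w \<in> ?S" using tW1 W1(2) t(3) by (metis image_eqI subsetD)
    moreover have "cyl src rng (Fin ?w []) \<subseteq> W1"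
    proof
      fix z assume z: "z \<in> cyl src rng (Fin ?w [])"
      then have zb: "z \<in> bpaths src rng" and zs: "gsrc src z = ?w" by (auto simp: cyl_vert)
      have "gcat ?mu z \<in> cyl src rng ?mu" unfolding cyl_def using zb zs by blast
      then have "gcat ?mu z \<in> bpaths src rng" "gsrc src (gcat ?mu z) = gsrc src ?mu"
        "\<forall>i<glen ?mu. ed (gcat ?mu z) i = ed ?mu i"
        using mu by (simp_all add: cyl_char)
      moreover have "gsrc src ?mu = src (f 0)" using Inf by (simp add: pre_def)
      moreover have "glen ?mu = n" by (simp add: pre_def)
      moreover have "\<forall>i<n. ed ?mu i = Some (f i)" using Inf by (simp add: ed_pre)
      ultimately have "gcat ?mu z \<in> W1" using n by simp
      then show "z \<in> W1" using inv_gcat[OF i1 mu zb zs[symmetric]] by simp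
    qed
    ultimately have "cyl src rng (Fin ?w []) \<subseteq> W2" using e1 by blast
    moreover have "t \<in> cyl src rng (Fin ?w [])" using t by (simp add: cyl_vert)
    ultimately have "t \<in> W2" by blast
    then show ?thesis using inv_gcat[OF i2 mu t(2) t(3)[symmetric]] t(1) by simp
  qed
qed

lemma finite_B:
  assumes U: "compact_open_invariant src rng U"
  shows "finite {W. W \<subseteq> U \<and> compact_open_invariant src rng W}"
proof -
  let ?B = "{W. W \<subseteq> U \<and> compact_open_invariant src rng W}"
  let ?S = "gsrc src ` U"
  have fS: "finite ?S" using U finite_src unfolding compact_open_invariant_def by blast
  have inj: "inj_on (code src rng ?S) ?B"
  proof (rule inj_onI)
    fix W1 W2 assume "W1 \<in> ?B" "W2 \<in> ?B" "code src rng ?S W1 = code src rng ?S W2"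
    then show "W1 = W2" using code_sub[OF U] by (metis (no_types, lifting) mem_Collect_eq subset_antisym)
  qed
  have "code src rng ?S ` ?B \<subseteq> Pow ?S \<times> Pow ?S" unfolding code_def by auto
  then have "finite (code src rng ?S ` ?B)" using fS by (meson finite_Pow_iff finite_SigmaI finite_subset)
  then show ?thesis using inj by (rule finite_imageD)
qed



lemma coi_Inter:
  assumes "finite F" "F \<noteq> {}" "\<forall>W\<in>F. compact_open_invariant src rng W"
  shows "compact_open_invariant src rng (\<Inter>F)"
  using assms
proof (induction F rule: finite_ne_induct)
  case (singleton x) then show ?case by simp
next
  case (insert x F)
  then show ?case using coi_Int[of src rng x "\<Inter>F"] by simp
qed

theorem lemma3p9:
  fixes src rng :: "'e \<Rightarrow> 'v" and U :: "('v, 'e) gpath set"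
  assumes "compact_open_invariant src rng U"
  defines "M \<equiv> {V. minimal_coi src rng V \<and> V \<subseteq> U}"
  shows "finite M \<and> pairwise disjnt M \<and> U = \<Union>M"
proof -
  note U = assms(1)
  let ?B = "{W. W \<subseteq> U \<and> compact_open_invariant src rng W}"
  have fB: "finite ?B" by (rule finite_B[OF U])
  have MB: "M \<subseteq> ?B" unfolding M_def minimal_coi_def by auto
  have fM: "finite M" using fB MB finite_subset by blast
  have pd: "pairwise disjnt M"
  proof (rule pairwiseI)
    fix V1 V2 assume v1: "V1 \<in> M" and v2: "V2 \<in> M" and ne: "V1 \<noteq> V2"
    show "disjnt V1 V2"
    proof (rule ccontr)
      assume "\<not> disjnt V1 V2"
      then have nI: "V1 \<inter> V2 \<noteq> {}" by (simp add: disjnt_def)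
      have m1: "minimal_coi src rng V1" and m2: "minimal_coi src rng V2" using v1 v2 unfolding M_def by auto
      have c1: "compact_open_invariant src rng V1" and c2: "compact_open_invariant src rng V2"
        using m1 m2 unfolding minimal_coi_def by auto
      have cI: "compact_open_invariant src rng (V1 \<inter> V2)" by (rule coi_Int[OF c1 c2])
      have a1: "\<forall>W. W \<noteq> {} \<and> W \<subseteq> V1 \<and> compact_open_invariant src rng W \<longrightarrow> W = V1"
        using m1 by (simp add: minimal_coi_def)
      have a2: "\<forall>W. W \<noteq> {} \<and> W \<subseteq> V2 \<and> compact_open_invariant src rng W \<longrightarrow> W = V2"
        using m2 by (simp add: minimal_coi_def)
      have "V1 \<inter> V2 = V1" using spec[OF a1, of "V1 \<inter> V2"] nI cI by simp
      moreover have "V1 \<inter> V2 = V2" using spec[OF a2, of "V1 \<inter> V2"] nI cI by simp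
      ultimately show False using ne by simp
    qed
  qed
  have cov: "U \<subseteq> \<Union>M"
  proof
    fix x assume xU: "x \<in> U"
    let ?F = "{W \<in> ?B. x \<in> W}"
    let ?I = "\<Inter>?F"
    have fF: "finite ?F" by (rule finite_subset[OF _ fB]) blast
    have UF: "U \<in> ?F" using U xU by simp
    then have neF: "?F \<noteq> {}" by blast
    have cI: "compact_open_invariant src rng ?I" by (rule coi_Inter[OF fF neF]) simp
    have IU: "?I \<subseteq> U" using UF by blast
    have xI: "x \<in> ?I" by blast
    have "minimal_coi src rng ?I"
      unfolding minimal_coi_def
    proof (intro conjI allI impI)
      show "?I \<noteq> {}" using xI by blast
      show "compact_open_invariant src rng ?I" by (rule cI)
      fix W assume W: "W \<noteq> {} \<and> W \<subseteq> ?I \<and> compact_open_invariant src rng W"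
      show "W = ?I"
      proof (cases "x \<in> W")
        case True
        then have "W \<in> ?F" using W IU by blast
        then have IW: "?I \<subseteq> W" by blast
        have WI: "W \<subseteq> ?I" using W by simp
        show ?thesis by (rule subset_antisym[OF WI IW])
      next
        case False
        have "compact_open_invariant src rng (?I - W)" using coi_Diff[OF cI] W by blast
        then have "?I - W \<in> ?F" using IU xI False by blast
        then have "?I \<subseteq> ?I - W" by blast
        then have e: "W \<inter> ?I = {}" by blast
        have WI: "W \<subseteq> ?I" using W by simp
        have "W \<inter> ?I = W" by (rule Int_absorb2[OF WI])
        then have "W = {}" using e by simp
        then show ?thesis using W by simp
      qed
    qed
    then have "?I \<in> M" using IU unfolding M_def by blast
    then show "x \<in> \<Union>M" using xI by blast
  qed
  have "\<Union>M \<subseteq> U" unfolding M_def by blast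
  then show ?thesis using fM pd cov by blast
qed


end
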